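(* There is an absolute constant $c>0$ such that the following holds. Let $n\ge1$, $\alpha\in(0,1)$, $\beta\in(0,1/2)$, $\gamma=\sqrt\beta$, and let $D\ge D_0:=\sqrt{\alpha n}$. Let $$\mathcal{S}_D=\{x\in S^{n-1}: \mathrm{LCD}_{\alpha,\beta}(x)\in[D,2D]\text{ and } x \text{ is }(\alpha,\gamma)\text{-incompressible}\},$$ and $\nu=6\beta\sqrt n/D$. Then there exists a set $\mathcal{N}_D\subset\mathcal{S}_D$ such that every $x\in\mathcal{S}_D$ has some $y\in\mathcal{N}_D$ with $\|x-y\|_2\le\nu$, and $$|\mathcal{N}_D|\le\frac{D}{\beta}\left(\frac{cD}{\sqrt{\alpha n}}\right)^n\left(\frac1\beta\right)^{\alpha n}.$$
   Context: For $y\in\mathbb{R}^n$ write $y=[y]+\{y\}$ with $[y]\in\mathbb{Z}^n$ and $\{y\}\in[-1/2,1/2]^n$ (coordinatewise nearest-integer rounding). For $\alpha,\gamma\in(0,1)$, a unit vector $x\in S^{n-1}$ is $(\alpha,\gamma)$-compressible if $x=u+v$ where $u$ has at most $\alpha n$ nonzero coordinates and $\|v\|_2\le\gamma$; otherwise $x$ is $(\alpha,\gamma)$-incompressible. For $x\in S^{n-1}$, $\mathrm{LCD}_{\alpha,\beta}(x)$ is the infimum of all $D>0$ such that $\{Dx\}=u+v$ with $u$ having at most $\alpha n$ nonzero coordinates and $\|v\|_2\le\beta\min(D,\sqrt n)$ (infimum of the empty set being $+\infty$). *)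

theory Defs
  imports "HOL-Analysis.Analysis"
begin

text \<open>Vectors in R^n are represented as functions nat => real; only coordinates i < n matter.
  The dimension n is an explicit natural number because the constant c must be uniform in n.\<close>

definition l2 :: "nat \<Rightarrow> (nat \<Rightarrow> real) \<Rightarrow> real" where
  "l2 n x = sqrt (\<Sum>i<n. (x i)^2)"

definition unit_sphere :: "nat \<Rightarrow> (nat \<Rightarrow> real) set" where
  "unit_sphere n = {x. (\<forall>i\<ge>n. x i = 0) \<and> l2 n x = 1}"

definition fracr :: "real \<Rightarrow> real" where
  "fracr y = y - of_int (round y)"

definition sparse :: "nat \<Rightarrow> real \<Rightarrow> (nat \<Rightarrow> real) \<Rightarrow> bool" where
  "sparse n \<alpha> u \<longleftrightarrow> real (card {i\<in>{..<n}. u i \<noteq> 0}) \<le> \<alpha> * real n"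

definition compressible :: "nat \<Rightarrow> real \<Rightarrow> real \<Rightarrow> (nat \<Rightarrow> real) \<Rightarrow> bool" where
  "compressible n \<alpha> \<gamma> x \<longleftrightarrow>
     (\<exists>u v. (\<forall>i<n. x i = u i + v i) \<and> sparse n \<alpha> u \<and> l2 n v \<le> \<gamma>)"

definition LCD :: "nat \<Rightarrow> real \<Rightarrow> real \<Rightarrow> (nat \<Rightarrow> real) \<Rightarrow> ereal" where
  "LCD n \<alpha> \<beta> x = Inf {ereal D | D. D > 0 \<and>
     (\<exists>u v. (\<forall>i<n. fracr (D * x i) = u i + v i) \<and> sparse n \<alpha> u \<and>
            l2 n v \<le> \<beta> * min D (sqrt (real n)))}"

definition S_D :: "nat \<Rightarrow> real \<Rightarrow> real \<Rightarrow> real \<Rightarrow> (nat \<Rightarrow> real) set" where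
  "S_D n \<alpha> \<beta> D = {x \<in> unit_sphere n. ereal D \<le> LCD n \<alpha> \<beta> x \<and> LCD n \<alpha> \<beta> x \<le> ereal (2*D)
      \<and> \<not> compressible n \<alpha> (sqrt \<beta>) x}"

end

theory Submission imports Defs begin

lemma geom_aux:
  fixes a :: real assumes a: "a > 0"
  shows "(\<Sum>j\<in>{-int M..int M}. exp (-a * \<bar>real_of_int j\<bar>))
     \<le> (1 + exp (-a)) / (1 - exp (-a)) - 2 * exp (-a * (real M + 1)) / (1 - exp (-a))"
proof (induction M)
  case 0
  have r: "exp (-a) < 1" using a by simp
  have "(1 + exp (-a)) / (1 - exp (-a)) - 2 * exp (-a * (real 0 + 1)) / (1 - exp (-a)) = 1"
  proof -
    have nz: "1 - exp (-a) \<noteq> 0" using r by simp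
    have "(1 + exp (-a)) / (1 - exp (-a)) - 2 * exp (-a) / (1 - exp (-a)) = (1 - exp (-a)) / (1 - exp (-a))"
      by (simp add: diff_divide_distrib[symmetric])
    then show ?thesis using nz by simp
  qed
  then show ?case by simp
next
  case (Suc M)
  have r: "exp (-a) < 1" using a by simp
  have set: "{-int (Suc M)..int (Suc M)} = insert (-int (Suc M)) (insert (int (Suc M)) {-int M..int M})"
    by auto
  have "(\<Sum>j\<in>{-int (Suc M)..int (Suc M)}. exp (-a * \<bar>real_of_int j\<bar>))
      = 2 * exp (-a * (real M + 1)) + (\<Sum>j\<in>{-int M..int M}. exp (-a * \<bar>real_of_int j\<bar>))"
    unfolding set by simp
  also have "\<dots> \<le> 2 * exp (-a * (real M + 1)) + ((1 + exp (-a)) / (1 - exp (-a)) - 2 * exp (-a * (real M + 1)) / (1 - exp (-a)))"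
    using Suc.IH by simp
  also have "\<dots> = (1 + exp (-a)) / (1 - exp (-a)) - 2 * exp (-a * (real (Suc M) + 1)) / (1 - exp (-a))"
  proof -
    have e: "exp (-a * (real (Suc M) + 1)) = exp (-a) * exp (-a * (real M + 1))"
      by (simp add: exp_add[symmetric] algebra_simps)
    have gen: "\<And>r q A::real. r < 1 \<Longrightarrow> 2 * q + (A - 2 * q / (1 - r)) = A - 2 * (r * q) / (1 - r)"
      by (simp add: field_simps)
    show ?thesis unfolding e using gen[OF r] by simp
  qed
  finally show ?case .
qed

lemma geom_sum:
  fixes a :: real assumes a: "a > 0"
  shows "(\<Sum>j\<in>{-int M..int M}. exp (-a * \<bar>real_of_int j\<bar>)) \<le> 1 + 2 / a"
proof -
  have r: "exp (-a) < 1" using a by simp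
  have "(1 + exp (-a)) / (1 - exp (-a)) \<le> 1 + 2 / a"
  proof -
    have "1 + a \<le> exp a" by (rule exp_ge_add_one_self)
    have ea: "exp (-a) = 1 / exp a" by (simp add: exp_minus field_simps)
    have "(1 + exp (-a)) / (1 - exp (-a)) = 1 + 2 / (exp a - 1)"
      unfolding ea using a by (simp add: field_simps)
    also have "\<dots> \<le> 1 + 2 / a"
      using divide_left_mono[of a "exp a - 1" 2] \<open>1 + a \<le> exp a\<close> a by simp
    finally show ?thesis .
  qed
  moreover have "0 \<le> 2 * exp (-a * (real M + 1)) / (1 - exp (-a))" using r by simp
  ultimately show ?thesis using geom_aux[OF a, of M] by linarith
qed

lemma count_box:
  fixes A :: "'a set" and w :: "'a \<Rightarrow> real"
  assumes A: "finite A" and w: "\<And>i. i \<in> A \<Longrightarrow> w i > 0" and lam: "lam > 0"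
  shows "real (card {k \<in> PiE A (\<lambda>_. {-int M..int M}). (\<Sum>i\<in>A. w i * \<bar>real_of_int (k i)\<bar>) \<le> K})
     \<le> exp (lam * K) * (\<Prod>i\<in>A. 1 + 2 / (lam * w i))"
proof -
  define P where "P = PiE A (\<lambda>_. {-int M..int M})"
  define T where "T = {k \<in> P. (\<Sum>i\<in>A. w i * \<bar>real_of_int (k i)\<bar>) \<le> K}"
  define g where "g k = exp (lam * (K - (\<Sum>i\<in>A. w i * \<bar>real_of_int (k i)\<bar>)))" for k
  have fP: "finite P" unfolding P_def using A by (simp add: finite_PiE)
  have TP: "T \<subseteq> P" unfolding T_def by auto
  have "real (card T) = (\<Sum>k\<in>T. 1)" by simp
  also have "\<dots> \<le> (\<Sum>k\<in>T. g k)"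
  proof (rule sum_mono)
    fix k assume "k \<in> T"
    then have "0 \<le> lam * (K - (\<Sum>i\<in>A. w i * \<bar>real_of_int (k i)\<bar>))"
      unfolding T_def using lam by simp
    then show "1 \<le> g k" unfolding g_def by simp
  qed
  also have "\<dots> \<le> (\<Sum>k\<in>P. g k)"
    by (rule sum_mono2[OF fP TP]) (simp add: g_def)
  also have "\<dots> = (\<Sum>k\<in>P. exp (lam * K) * (\<Prod>i\<in>A. exp (- lam * w i * \<bar>real_of_int (k i)\<bar>)))"
  proof (rule sum.cong[OF refl])
    fix k
    have "g k = exp (lam * K + (\<Sum>i\<in>A. - lam * w i * \<bar>real_of_int (k i)\<bar>))"
      unfolding g_def by (simp add: algebra_simps sum_distrib_left sum_negf)
    also have "\<dots> = exp (lam * K) * (\<Prod>i\<in>A. exp (- lam * w i * \<bar>real_of_int (k i)\<bar>))"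
      by (simp add: exp_add exp_sum[OF A])
    finally show "g k = \<dots>" .
  qed
  also have "\<dots> = exp (lam * K) * (\<Prod>i\<in>A. \<Sum>j\<in>{-int M..int M}. exp (- lam * w i * \<bar>real_of_int j\<bar>))"
    unfolding P_def by (simp add: sum_distrib_left prod_sum_PiE[OF A])
  also have "\<dots> \<le> exp (lam * K) * (\<Prod>i\<in>A. 1 + 2 / (lam * w i))"
  proof (rule mult_left_mono[OF prod_mono])
    fix i assume "i \<in> A"
    then have p: "lam * w i > 0" using w lam by simp
    show "0 \<le> (\<Sum>j\<in>{-int M..int M}. exp (- lam * w i * \<bar>real_of_int j\<bar>)) \<and>
          (\<Sum>j\<in>{-int M..int M}. exp (- lam * w i * \<bar>real_of_int j\<bar>)) \<le> 1 + 2 / (lam * w i)"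
      using geom_sum[OF p, of M] by (simp add: sum_nonneg)
  qed simp
  finally show ?thesis unfolding T_def P_def .
qed


lemma L2_scale: "L2_set (\<lambda>i. c * f i) A = \<bar>c\<bar> * L2_set f A"
  unfolding L2_set_def
  by (simp add: power_mult_distrib real_sqrt_mult flip: sum_distrib_left)

lemma L2_neg: "L2_set (\<lambda>i. - f i) A = L2_set f A"
  unfolding L2_set_def by simp

lemma L2_abs: "L2_set (\<lambda>i. \<bar>f i\<bar>) A = L2_set f A"
  unfolding L2_set_def by simp

lemma L2_diff_sym: "L2_set (\<lambda>i. f i - g i) A = L2_set (\<lambda>i. g i - f i) A"
  unfolding L2_set_def by (simp add: power2_commute)

lemma L2_tri_diff: "L2_set (\<lambda>i. f i - g i) A \<le> L2_set (\<lambda>i. f i - h i) A + L2_set (\<lambda>i. h i - g i) A"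
proof -
  have "L2_set (\<lambda>i. f i - g i) A = L2_set (\<lambda>i. (f i - h i) + (h i - g i)) A" by simp
  also have "\<dots> \<le> L2_set (\<lambda>i. f i - h i) A + L2_set (\<lambda>i. h i - g i) A" by (rule L2_set_triangle_ineq)
  finally show ?thesis .
qed

lemma normalize_bound:
  assumes x1: "L2_set x A = 1" and d: "d > 0"
  shows "L2_set (\<lambda>i. x i - b i / L2_set b A) A \<le> 2 * L2_set (\<lambda>i. d * x i - b i) A / d"
proof -
  define nb where "nb = L2_set b A"
  define E where "E = L2_set (\<lambda>i. d * x i - b i) A"
  have E0: "E \<ge> 0" unfolding E_def by simp
  have nb0: "nb \<ge> 0" unfolding nb_def by simp
  have dec: "\<And>i. x i - b i / nb = (1/d) * (d * x i - b i) + (1/d - 1/nb) * b i"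
    using d by (simp add: field_simps)
  have "L2_set (\<lambda>i. x i - b i / nb) A = L2_set (\<lambda>i. (1/d) * (d * x i - b i) + (1/d - 1/nb) * b i) A"
    by (simp only: dec)
  also have "\<dots> \<le> L2_set (\<lambda>i. (1/d) * (d * x i - b i)) A + L2_set (\<lambda>i. (1/d - 1/nb) * b i) A"
    by (rule L2_set_triangle_ineq)
  also have "\<dots> = E / d + \<bar>1/d - 1/nb\<bar> * nb"
    unfolding L2_scale E_def nb_def using d by simp
  also have "\<dots> \<le> E / d + E / d"
  proof (cases "nb = 0")
    case True
    have "0 \<le> E / d" using E0 d by simp
    moreover have "\<bar>1/d - 1/nb\<bar> * nb = 0" using True by simp
    ultimately show ?thesis by linarith
  next
    case False
    then have nbp: "nb > 0" using nb0 by simp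
    have dd: "L2_set (\<lambda>i. d * x i) A = d" using x1 d by (simp add: L2_scale)
    have "d \<le> E + nb"
      using L2_tri_diff[of "\<lambda>i. d * x i" "\<lambda>i. 0" A b] dd unfolding E_def nb_def by simp
    moreover have "nb \<le> E + d"
      using L2_tri_diff[of b "\<lambda>i. 0" A "\<lambda>i. d * x i"] dd L2_diff_sym[of b "\<lambda>i. d * x i" A]
      unfolding E_def nb_def by simp
    ultimately have "\<bar>nb - d\<bar> \<le> E" by simp
    moreover have "\<bar>1/d - 1/nb\<bar> * nb = \<bar>nb - d\<bar> / d"
    proof -
      have "1/d - 1/nb = (nb - d)/(d*nb)" using nbp d by (simp add: field_simps)
      then have "\<bar>1/d - 1/nb\<bar> = \<bar>nb - d\<bar>/(d*nb)" using nbp d by (simp add: abs_divide abs_mult)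
      then show ?thesis using nbp d by simp
    qed
    ultimately have "\<bar>1/d - 1/nb\<bar> * nb \<le> E / d" using d by (simp add: divide_right_mono)
    then show ?thesis by linarith
  qed
  finally show ?thesis unfolding nb_def E_def by simp
qed


lemma l2_L2: "l2 n f = L2_set f {..<n}"
  unfolding l2_def L2_set_def by simp

lemma abs_le_one:
  fixes n :: nat
  assumes "L2_set x {..<n} = 1" "i < n" shows "\<bar>x i\<bar> \<le> 1"
proof -
  have "\<bar>x i\<bar> \<le> L2_set (\<lambda>i. \<bar>x i\<bar>) {..<n}" by (rule member_le_L2_set) (use assms in simp_all)
  then show ?thesis using assms L2_abs[of x] by simp
qed

lemma approx_center:
  fixes n :: nat
  assumes x1: "L2_set x {..<n} = 1" and D1: "D1 > 0"
    and dec: "\<forall>i<n. fracr (D1 * x i) = u i + v i" and h: "0 < h" "h \<le> 1"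
    and S: "S = {i\<in>{..<n}. u i \<noteq> 0}"
    and w: "w = (\<lambda>i. if i \<in> S then h else 1)"
    and C: "C = (\<lambda>i. w i * of_int (round (D1 * x i / w i)))"
  shows "L2_set (\<lambda>i. D1 * x i - C i) {..<n} \<le> L2_set v {..<n} + h/2 * sqrt n"
    and "(\<Sum>i<n. w i * \<bar>real_of_int (round (D1 * x i / w i))\<bar>) \<le> D1 * sqrt n + n/2"
proof -
  have wpos: "\<And>i. w i > 0" and wle: "\<And>i. w i \<le> 1" using h unfolding w by auto
  have basic: "\<bar>D1 * x i - C i\<bar> \<le> w i / 2" for i
  proof -
    have "\<bar>D1 * x i - C i\<bar> = w i * \<bar>of_int (round (D1 * x i / w i)) - D1 * x i / w i\<bar>"
      unfolding C using wpos[of i] by (simp add: field_simps abs_mult[symmetric] abs_minus_commute)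
    also have "\<dots> \<le> w i * (1/2)"
      by (rule mult_left_mono[OF of_int_round_abs_le]) (use wpos[of i] in simp)
    finally show ?thesis by simp
  qed
  have pt: "\<bar>D1 * x i - C i\<bar> \<le> \<bar>v i\<bar> + h/2" if "i < n" for i
  proof (cases "i \<in> S")
    case True
    then have "\<bar>D1 * x i - C i\<bar> \<le> h/2" using basic[of i] unfolding w by simp
    then show ?thesis by (smt (verit) abs_ge_zero)
  next
    case False
    then have "u i = 0" using S that by auto
    then have "fracr (D1 * x i) = v i" using dec that by simp
    moreover have "C i = of_int (round (D1 * x i))" unfolding C w using False by simp
    ultimately have "D1 * x i - C i = v i" unfolding fracr_def by simp
    then show ?thesis using h by simp
  qed
  have "L2_set (\<lambda>i. D1 * x i - C i) {..<n} = L2_set (\<lambda>i. \<bar>D1 * x i - C i\<bar>) {..<n}"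
    by (simp add: L2_abs)
  also have "\<dots> \<le> L2_set (\<lambda>i. \<bar>v i\<bar> + h/2) {..<n}"
    by (rule L2_set_mono) (use pt in auto)
  also have "\<dots> \<le> L2_set (\<lambda>i. \<bar>v i\<bar>) {..<n} + L2_set (\<lambda>i. h/2) {..<n}"
    by (rule L2_set_triangle_ineq)
  also have "\<dots> = L2_set v {..<n} + h/2 * sqrt n"
    using h by (simp add: L2_abs L2_set_constant)
  finally show "L2_set (\<lambda>i. D1 * x i - C i) {..<n} \<le> L2_set v {..<n} + h/2 * sqrt n" .
  have pt2: "w i * \<bar>real_of_int (round (D1 * x i / w i))\<bar> \<le> D1 * \<bar>x i\<bar> + 1/2" for i
  proof -
    have "w i * \<bar>real_of_int (round (D1 * x i / w i))\<bar> = \<bar>C i\<bar>"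
      unfolding C using wpos[of i] by (simp add: abs_mult)
    also have "\<dots> \<le> \<bar>D1 * x i\<bar> + w i / 2" using basic[of i] by linarith
    also have "\<dots> \<le> D1 * \<bar>x i\<bar> + 1/2" using D1 wle[of i] by (simp add: abs_mult)
    finally show ?thesis .
  qed
  have cs: "(\<Sum>i<n. \<bar>x i\<bar>) \<le> sqrt n"
  proof -
    have "(\<Sum>i<n. \<bar>x i\<bar> * \<bar>1::real\<bar>) \<le> L2_set x {..<n} * L2_set (\<lambda>i. 1) {..<n}"
      by (rule L2_set_mult_ineq)
    then show ?thesis using x1 by (simp add: L2_set_constant)
  qed
  have "(\<Sum>i<n. w i * \<bar>real_of_int (round (D1 * x i / w i))\<bar>) \<le> (\<Sum>i<n. D1 * \<bar>x i\<bar> + 1/2)"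
    by (rule sum_mono) (rule pt2)
  also have "\<dots> = D1 * (\<Sum>i<n. \<bar>x i\<bar>) + n/2"
    by (simp add: sum.distrib sum_distrib_left)
  also have "\<dots> \<le> D1 * sqrt n + n/2"
    using cs D1 by simp
  finally show "(\<Sum>i<n. w i * \<bar>real_of_int (round (D1 * x i / w i))\<bar>) \<le> D1 * sqrt n + n/2" .
qed

lemma lcd_ge_half:
  assumes x: "x \<in> unit_sphere n" and nc: "\<not> compressible n \<alpha> (sqrt \<beta>) x"
    and b: "0 < \<beta>" "\<beta> < 1" and D1: "D1 > 0"
    and dec: "\<forall>i<n. fracr (D1 * x i) = u i + v i" and sp: "sparse n \<alpha> u"
    and vb: "l2 n v \<le> \<beta> * min D1 (sqrt (real n))"
  shows "D1 \<ge> 1/2"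
proof (rule ccontr)
  assume "\<not> D1 \<ge> 1/2"
  then have small: "D1 < 1/2" by simp
  have x1: "L2_set x {..<n} = 1" using x unfolding unit_sphere_def l2_L2 by simp
  have fr: "fracr (D1 * x i) = D1 * x i" if "i < n" for i
  proof -
    have "\<bar>D1 * x i\<bar> \<le> D1" using abs_le_one[OF x1 that] D1 by (simp add: abs_mult mult_left_le)
    then have "\<bar>D1 * x i - of_int 0\<bar> < 1/2" using small by simp
    then have "round (D1 * x i) = 0" by (rule round_unique')
    then show ?thesis unfolding fracr_def by simp
  qed
  have "compressible n \<alpha> (sqrt \<beta>) x"
    unfolding compressible_def
  proof (intro exI conjI)
    show "\<forall>i<n. x i = u i / D1 + v i / D1"
      using fr dec D1 by (auto simp: field_simps)
    have "{i\<in>{..<n}. u i / D1 \<noteq> 0} = {i\<in>{..<n}. u i \<noteq> 0}" using D1 by auto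
    then show "sparse n \<alpha> (\<lambda>i. u i / D1)" using sp unfolding sparse_def by simp
    have "l2 n (\<lambda>i. v i / D1) = l2 n v / D1"
      unfolding l2_L2 using L2_scale[of "1/D1" v] D1 by simp
    also have "\<dots> \<le> \<beta> * D1 / D1"
    proof -
      have "\<beta> * min D1 (sqrt (real n)) \<le> \<beta> * D1" using b by (simp add: mult_left_mono)
      then have "l2 n v \<le> \<beta> * D1" using vb by linarith
      then show ?thesis using D1 by (simp add: pos_divide_le_eq)
    qed
    also have "\<dots> = \<beta>" using D1 by simp
    also have "\<dots> \<le> sqrt \<beta>"
    proof -
      have "\<beta> * \<beta> \<le> \<beta>" using b by (simp add: mult_le_one)
      then show ?thesis using b by (simp add: real_le_rsqrt power2_eq_square)
    qed
    finally show "l2 n (\<lambda>i. v i / D1) \<le> sqrt \<beta>" .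
  qed
  then show False using nc by simp
qed


lemma fiber_bound:
  fixes n :: nat
  assumes n: "n \<ge> 1" and K: "K > 0" and h: "0 < h" "h \<le> 1" and S: "S \<subseteq> {..<n}"
  shows "real (card {k \<in> PiE {..<n} (\<lambda>_. {-int M..int M}).
            (\<Sum>i<n. (if i \<in> S then h else 1) * \<bar>real_of_int (k i)\<bar>) \<le> K})
         \<le> exp 1 ^ n * (1 + 2 * K / n) ^ n * (1/h) ^ card S"
proof -
  define lam where "lam = real n / K"
  have lam: "lam > 0" unfolding lam_def using n K by simp
  have "real (card {k \<in> PiE {..<n} (\<lambda>_. {-int M..int M}).
            (\<Sum>i<n. (if i \<in> S then h else 1) * \<bar>real_of_int (k i)\<bar>) \<le> K})
     \<le> exp (lam * K) * (\<Prod>i<n. 1 + 2 / (lam * (if i \<in> S then h else 1)))"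
    by (rule count_box) (use h lam in auto)
  also have "\<dots> \<le> exp (lam * K) * (\<Prod>i<n. (1 + 2 * K / n) * (if i \<in> S then 1/h else 1))"
  proof (rule mult_left_mono[OF prod_mono])
    fix i assume "i \<in> {..<n}"
    have e: "2 / lam = 2 * K / n" unfolding lam_def by simp
    have a0: "0 \<le> 2 * K / n" using K by simp
    show "0 \<le> 1 + 2 / (lam * (if i \<in> S then h else 1)) \<and>
          1 + 2 / (lam * (if i \<in> S then h else 1)) \<le> (1 + 2 * K / n) * (if i \<in> S then 1/h else 1)"
    proof (cases "i \<in> S")
      case True
      have "2 / (lam * h) = (2 / lam) / h" by simp
      then have "2 / (lam * h) = (2 * K / n) / h" using e by simp
      moreover have "1 \<le> 1 / h" using h by simp
      moreover have "(1 + 2 * K / n) * (1/h) = 1/h + (2 * K / n) / h" by (simp add: add_divide_distrib)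
      ultimately have "1 + 2 / (lam * h) \<le> (1 + 2 * K / n) * (1/h)"
        by linarith
      then show ?thesis using True lam h by simp
    next
      case False
      then show ?thesis using e lam a0 by simp
    qed
  qed simp
  also have "\<dots> = exp 1 ^ n * (1 + 2 * K / n) ^ n * (1/h) ^ card S"
  proof -
    have "exp (lam * K) = exp 1 ^ n" unfolding lam_def using K exp_of_nat_mult[of n 1] by simp
    moreover have "(\<Prod>i<n. (1 + 2 * K / n) * (if i \<in> S then 1/h else 1)) = (1 + 2 * K / n) ^ n * (1/h) ^ card S"
    proof -
      have "(\<Prod>i<n. (if i \<in> S then 1/h else 1)) = (\<Prod>i\<in>{..<n} \<inter> {i. i \<in> S}. 1/h)"
        by (simp add: prod.If_cases)
      also have "{..<n} \<inter> {i. i \<in> S} = S" using S by auto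
      finally have "(\<Prod>i<n. (if i \<in> S then 1/h else 1)) = (1/h) ^ card S" by simp
      then show ?thesis by (simp add: prod.distrib)
    qed
    ultimately show ?thesis by (simp add: mult.assoc)
  qed
  finally show ?thesis .
qed

lemma final_ineq:
  fixes n :: nat and \<alpha> \<beta> D :: real
  assumes n: "n \<ge> 1" and a: "0 < \<alpha>" "\<alpha> < 1" and b: "0 < \<beta>" "\<beta> < 1/2"
    and D: "D \<ge> sqrt (\<alpha> * real n)" and D4: "D \<ge> 1/4"
  shows "2 ^ n * (exp 1 ^ n * (1 + 2 * (3 * D * sqrt n + n/2) / n) ^ n * (1/(2*\<beta>/3)) powr (\<alpha> * n))
      \<le> (D / \<beta>) * (150 * D / sqrt (\<alpha> * real n)) ^ n * (1 / \<beta>) powr (\<alpha> * real n)"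
proof -
  define s where "s = sqrt (\<alpha> * real n)"
  have s: "s > 0" unfolding s_def using a n by simp
  define t where "t = D / s"
  have t1: "t \<ge> 1" unfolding t_def using D s s_def by simp
  have sn: "sqrt (real n) > 0" using n by simp
  define P where "P = (1 / \<beta>) powr (\<alpha> * real n)"
  have P0: "P \<ge> 0" unfolding P_def by simp
  have k: "1 + 2 * (3 * D * sqrt n + n/2) / n \<le> 8 * t"
  proof -
    have "2 * (3 * D * sqrt n + n/2) / n = 6 * D / sqrt n + 1"
      using sn n by (simp add: field_simps)
    moreover have "D / sqrt n \<le> t"
    proof -
      have "s = sqrt \<alpha> * sqrt n" unfolding s_def by (simp add: real_sqrt_mult)
      moreover have "sqrt \<alpha> \<le> 1" using a by simp
      ultimately have "s \<le> sqrt n" using sn by (simp add: mult_left_le_one_le)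
      then show ?thesis unfolding t_def using s D4 by (simp add: frac_le)
    qed
    ultimately show ?thesis using t1 by simp
  qed
  have hp: "(1/(2*\<beta>/3)) powr (\<alpha> * n) \<le> (3/2) ^ n * P"
  proof -
    have "(1/(2*\<beta>/3)) powr (\<alpha> * n) = (3/2 * (1/\<beta>)) powr (\<alpha> * n)" by simp
    also have "\<dots> = (3/2) powr (\<alpha> * n) * P" unfolding P_def using b powr_mult[of "3/2" "1/\<beta>" "\<alpha> * n"] by simp
    also have "\<dots> \<le> (3/2) powr (real n) * P"
      by (rule mult_right_mono[OF powr_mono P0]) (use a in \<open>simp_all add: mult_left_le_one_le\<close>)
    also have "\<dots> = (3/2) ^ n * P" by (simp add: powr_realpow)
    finally show ?thesis .
  qed
  have "2 ^ n * (exp 1 ^ n * (1 + 2 * (3 * D * sqrt n + n/2) / n) ^ n * (1/(2*\<beta>/3)) powr (\<alpha> * n))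
      \<le> 2 ^ n * (3 ^ n * (8 * t) ^ n * ((3/2) ^ n * P))"
  proof -
    have B0: "0 \<le> 1 + 2 * (3 * D * sqrt n + n/2) / n" using D4 by simp
    have f1: "(1 + 2 * (3 * D * sqrt n + n/2) / n) ^ n \<le> (8 * t) ^ n" by (rule power_mono[OF k B0])
    have f2: "exp 1 ^ n \<le> (3::real) ^ n" by (rule power_mono[OF exp_le]) simp
    have "exp 1 ^ n * (1 + 2 * (3 * D * sqrt n + n/2) / n) ^ n \<le> 3 ^ n * (8 * t) ^ n"
      by (rule mult_mono[OF f2 f1]) (use B0 in simp_all)
    then have "exp 1 ^ n * (1 + 2 * (3 * D * sqrt n + n/2) / n) ^ n * (1/(2*\<beta>/3)) powr (\<alpha> * n)
        \<le> 3 ^ n * (8 * t) ^ n * ((3/2) ^ n * P)"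
      by (rule mult_mono[OF _ hp]) (use t1 in simp_all)
    then show ?thesis by (simp add: mult.assoc)
  qed
  also have "\<dots> = (2 * 3 * 8 * (3/2) * t) ^ n * P" by (simp only: power_mult_distrib mult_ac)
  also have "\<dots> = (72 * t) ^ n * P" by simp
  also have "\<dots> \<le> (1/2) * (150 * t) ^ n * P"
  proof -
    have "2 * (72 * t) ^ n \<le> (144 * t) ^ n"
    proof -
      have "(144 * t) ^ n = (2 * (72 * t)) ^ n" by simp
      also have "\<dots> = 2 ^ n * (72 * t) ^ n" by (rule power_mult_distrib)
      finally have "(144 * t) ^ n = 2 ^ n * (72 * t) ^ n" .
      moreover have "(2::real) \<le> 2 ^ n" using n by (metis one_le_numeral power_increasing power_one_right)
      ultimately show ?thesis using t1 by (simp add: mult_right_mono)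
    qed
    also have "\<dots> \<le> (150 * t) ^ n" by (rule power_mono) (use t1 in simp_all)
    finally have "(72 * t) ^ n \<le> (1/2) * (150 * t) ^ n" by linarith
    from mult_right_mono[OF this P0] show ?thesis .
  qed
  also have "\<dots> \<le> (D / \<beta>) * (150 * t) ^ n * P"
  proof -
    have "1/2 \<le> D / \<beta>" using b D4 by (simp add: field_simps)
    moreover have "0 \<le> (150 * t) ^ n * P" using P0 t1 by simp
    ultimately have "(1/2) * ((150 * t) ^ n * P) \<le> (D / \<beta>) * ((150 * t) ^ n * P)"
      by (rule mult_right_mono)
    then show ?thesis by (simp only: mult.assoc)
  qed
  finally show ?thesis unfolding t_def s_def P_def by simp
qed


lemma get_D1:
  assumes x: "x \<in> S_D n \<alpha> \<beta> D" and D: "D > 0"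
  shows "\<exists>D1 u v. D \<le> D1 \<and> D1 < 3 * D \<and> D1 > 0 \<and> (\<forall>i<n. fracr (D1 * x i) = u i + v i) \<and>
          sparse n \<alpha> u \<and> l2 n v \<le> \<beta> * min D1 (sqrt (real n))"
proof -
  define A where "A = {ereal D | D. D > 0 \<and>
     (\<exists>u v. (\<forall>i<n. fracr (D * x i) = u i + v i) \<and> sparse n \<alpha> u \<and>
            l2 n v \<le> \<beta> * min D (sqrt (real n)))}"
  have L: "LCD n \<alpha> \<beta> x = Inf A" unfolding LCD_def A_def by simp
  have lo: "ereal D \<le> Inf A" and hi: "Inf A \<le> ereal (2*D)" using x L unfolding S_D_def by auto
  have "ereal (2*D) < ereal (3*D)" using D by simp
  with hi have "Inf A < ereal (3*D)" by (rule le_less_trans)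
  then obtain y where yA: "y \<in> A" and y3: "y < ereal (3*D)" by (auto simp: Inf_less_iff)
  from yA obtain D1 u v where y: "y = ereal D1" and D1: "D1 > 0" and dec: "\<forall>i<n. fracr (D1 * x i) = u i + v i"
    and sp: "sparse n \<alpha> u" and vb: "l2 n v \<le> \<beta> * min D1 (sqrt (real n))" unfolding A_def by blast
  have "ereal D \<le> y" using lo Inf_lower[OF yA] by (rule order_trans)
  then have "D \<le> D1" using y by simp
  moreover have "D1 < 3 * D" using y3 y by simp
  ultimately show ?thesis using D1 dec sp vb by blast
qed

lemma D_quarter:
  assumes x: "x \<in> S_D n \<alpha> \<beta> D" and b: "0 < \<beta>" "\<beta> < 1"
  shows "D \<ge> 1/4"
proof -
  define A where "A = {ereal D | D. D > 0 \<and>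
     (\<exists>u v. (\<forall>i<n. fracr (D * x i) = u i + v i) \<and> sparse n \<alpha> u \<and>
            l2 n v \<le> \<beta> * min D (sqrt (real n)))}"
  have L: "LCD n \<alpha> \<beta> x = Inf A" unfolding LCD_def A_def by simp
  have hi: "Inf A \<le> ereal (2*D)" using x L unfolding S_D_def by auto
  have xs: "x \<in> unit_sphere n" and nc: "\<not> compressible n \<alpha> (sqrt \<beta>) x" using x unfolding S_D_def by auto
  have "ereal (1/2) \<le> Inf A"
  proof (rule Inf_greatest)
    fix y assume "y \<in> A"
    then obtain D1 u v where y: "y = ereal D1" and D1: "D1 > 0" and dec: "\<forall>i<n. fracr (D1 * x i) = u i + v i"
      and sp: "sparse n \<alpha> u" and vb: "l2 n v \<le> \<beta> * min D1 (sqrt (real n))" unfolding A_def by blast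
    have "D1 \<ge> 1/2" by (rule lcd_ge_half[OF xs nc b D1 dec sp vb])
    then show "ereal (1/2) \<le> y" using y by simp
  qed
  then have "ereal (1/2) \<le> ereal (2*D)" using hi by (rule order_trans)
  then show ?thesis by simp
qed


theorem claim6p2:
  shows "\<exists>c::real. c > 0 \<and>
    (\<forall>(n::nat) (\<alpha>::real) (\<beta>::real) (D::real).
       n \<ge> 1 \<longrightarrow> 0 < \<alpha> \<longrightarrow> \<alpha> < 1 \<longrightarrow> 0 < \<beta> \<longrightarrow> \<beta> < 1/2 \<longrightarrow>
       D \<ge> sqrt (\<alpha> * real n) \<longrightarrow>
       (\<exists>N. N \<subseteq> S_D n \<alpha> \<beta> D \<and> finite N \<and>
          (\<forall>x\<in>S_D n \<alpha> \<beta> D. \<exists>y\<in>N. l2 n (\<lambda>i. x i - y i) \<le> 6 * \<beta> * sqrt (real n) / D) \<and>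
          real (card N) \<le> (D / \<beta>) * (c * D / sqrt (\<alpha> * real n)) ^ n * (1 / \<beta>) powr (\<alpha> * real n)))"
proof (intro exI[of _ 150] conjI allI impI)
  show "(0::real) < 150" by simp
  fix n :: nat and \<alpha> \<beta> D :: real
  assume n: "1 \<le> n" and a0: "0 < \<alpha>" and a1: "\<alpha> < 1" and b0: "0 < \<beta>" and b1: "\<beta> < 1/2"
    and Dge: "sqrt (\<alpha> * real n) \<le> D"
  define SD where "SD = S_D n \<alpha> \<beta> D"
  have Dpos: "D > 0" using Dge a0 n by (smt (verit) of_nat_0_less_iff real_sqrt_gt_zero mult_pos_pos less_le_trans le_numeral_extra(2) not_one_le_zero of_nat_le_0_iff)
  define RHS where "RHS = (D / \<beta>) * (150 * D / sqrt (\<alpha> * real n)) ^ n * (1 / \<beta>) powr (\<alpha> * real n)"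
  show "\<exists>N. N \<subseteq> S_D n \<alpha> \<beta> D \<and> finite N \<and>
          (\<forall>x\<in>S_D n \<alpha> \<beta> D. \<exists>y\<in>N. l2 n (\<lambda>i. x i - y i) \<le> 6 * \<beta> * sqrt (real n) / D) \<and>
          real (card N) \<le> (D / \<beta>) * (150 * D / sqrt (\<alpha> * real n)) ^ n * (1 / \<beta>) powr (\<alpha> * real n)"
  proof (cases "SD = {}")
    case True
    have "0 \<le> RHS" unfolding RHS_def
      by (intro mult_nonneg_nonneg zero_le_power divide_nonneg_nonneg) (use Dpos b0 a0 in simp_all)
    then show ?thesis using True unfolding SD_def RHS_def by (intro exI[of _ "{}"]) simp
  next
    case False
    then obtain x0 where "x0 \<in> SD" by blast
    then have D4: "D \<ge> 1/4" unfolding SD_def by (rule D_quarter) (use b0 b1 in simp_all)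

    define h where "h = 2 * \<beta> / 3"
    have h0: "0 < h" and h1: "h \<le> 1" unfolding h_def using b0 b1 by simp_all
    define K where "K = 3 * D * sqrt n + n/2"
    have K0: "K > 0"
    proof -
      have "0 \<le> 3 * D * sqrt n" using Dpos by simp
      moreover have "0 < real n / 2" using n by simp
      ultimately show ?thesis unfolding K_def by linarith
    qed
    define M where "M = nat \<lceil>K / h\<rceil>"
    have "\<forall>x\<in>SD. \<exists>p. D \<le> fst p \<and> fst p < 3 * D \<and> fst p > 0 \<and>
            (\<forall>i<n. fracr (fst p * x i) = fst (snd p) i + snd (snd p) i) \<and>
            sparse n \<alpha> (fst (snd p)) \<and> l2 n (snd (snd p)) \<le> \<beta> * min (fst p) (sqrt (real n))"
    proof
      fix x assume "x \<in> SD"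
      then obtain D1 u v where "D \<le> D1 \<and> D1 < 3 * D \<and> D1 > 0 \<and> (\<forall>i<n. fracr (D1 * x i) = u i + v i) \<and>
          sparse n \<alpha> u \<and> l2 n v \<le> \<beta> * min D1 (sqrt (real n))"
        using get_D1[OF _ Dpos] unfolding SD_def by blast
      then show "\<exists>p. D \<le> fst p \<and> fst p < 3 * D \<and> fst p > 0 \<and>
            (\<forall>i<n. fracr (fst p * x i) = fst (snd p) i + snd (snd p) i) \<and>
            sparse n \<alpha> (fst (snd p)) \<and> l2 n (snd (snd p)) \<le> \<beta> * min (fst p) (sqrt (real n))"
        by (intro exI[of _ "(D1, u, v)"]) simp
    qed
    then obtain F where F: "\<forall>x\<in>SD. D \<le> fst (F x) \<and> fst (F x) < 3 * D \<and> fst (F x) > 0 \<and>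
            (\<forall>i<n. fracr (fst (F x) * x i) = fst (snd (F x)) i + snd (snd (F x)) i) \<and>
            sparse n \<alpha> (fst (snd (F x))) \<and> l2 n (snd (snd (F x))) \<le> \<beta> * min (fst (F x)) (sqrt (real n))"
      by (rule bchoice[THEN exE]) blast
    define D1 where "D1 x = fst (F x)" for x
    define u where "u x = fst (snd (F x))" for x
    define v where "v x = snd (snd (F x))" for x
    have Fx: "D \<le> D1 x" "D1 x < 3 * D" "D1 x > 0" "\<forall>i<n. fracr (D1 x * x i) = u x i + v x i"
       "sparse n \<alpha> (u x)" "l2 n (v x) \<le> \<beta> * min (D1 x) (sqrt (real n))" if "x \<in> SD" for x
      using F that unfolding D1_def u_def v_def by auto
    define wS where "wS S i = (if i \<in> S then h else 1)" for S :: "nat set" and i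
    define Sx where "Sx x = {i\<in>{..<n}. u x i \<noteq> 0}" for x
    define kx where "kx x = restrict (\<lambda>i. round (D1 x * x i / wS (Sx x) i)) {..<n}" for x
    define code where "code x = (Sx x, kx x)" for x
    define cen where "cen p i = wS (fst p) i * real_of_int (snd p i)" for p :: "nat set \<times> (nat \<Rightarrow> int)" and i
    define cn where "cn p i = cen p i / L2_set (cen p) {..<n}" for p i
    have x1: "L2_set x {..<n} = 1" if "x \<in> SD" for x
      using that unfolding SD_def S_D_def unit_sphere_def l2_L2 by simp
    have approx: "L2_set (\<lambda>i. x i - cn (code x) i) {..<n} \<le> (8/3) * \<beta> * sqrt n / D" if xS: "x \<in> SD" for x
    proof -
      define C where "C = (\<lambda>i. wS (Sx x) i * of_int (round (D1 x * x i / wS (Sx x) i)))"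
      have ac: "L2_set (\<lambda>i. D1 x * x i - C i) {..<n} \<le> L2_set (v x) {..<n} + h/2 * sqrt n"
        by (rule approx_center(1)[OF x1[OF xS] Fx(3)[OF xS] Fx(4)[OF xS] h0 h1 Sx_def, where w="wS (Sx x)" and C=C])
           (simp_all add: wS_def C_def fun_eq_iff)
      have ceq: "\<And>i. i \<in> {..<n} \<Longrightarrow> cen (code x) i = C i"
        unfolding cen_def code_def kx_def C_def by simp
      have L2C: "L2_set (cen (code x)) {..<n} = L2_set C {..<n}" by (rule L2_set_cong) (simp_all add: ceq)
      have "L2_set (\<lambda>i. x i - cn (code x) i) {..<n} = L2_set (\<lambda>i. x i - C i / L2_set C {..<n}) {..<n}"
        unfolding cn_def L2C by (rule L2_set_cong) (simp_all add: ceq)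
      also have "\<dots> \<le> 2 * L2_set (\<lambda>i. D1 x * x i - C i) {..<n} / D1 x"
        by (rule normalize_bound[OF x1[OF xS] Fx(3)[OF xS]])
      also have "\<dots> \<le> 2 * (\<beta> * sqrt n + \<beta> * sqrt n / 3) / D1 x"
      proof -
        have "L2_set (v x) {..<n} \<le> \<beta> * sqrt n"
        proof -
          have "\<beta> * min (D1 x) (sqrt (real n)) \<le> \<beta> * sqrt n" using b0 by (simp add: mult_left_mono)
          then show ?thesis using Fx(6)[OF xS] unfolding l2_L2 by linarith
        qed
        moreover have "h/2 * sqrt n = \<beta> * sqrt n / 3" unfolding h_def by simp
        ultimately have "L2_set (\<lambda>i. D1 x * x i - C i) {..<n} \<le> \<beta> * sqrt n + \<beta> * sqrt n / 3"
          using ac by linarith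
        then have "2 * L2_set (\<lambda>i. D1 x * x i - C i) {..<n} \<le> 2 * (\<beta> * sqrt n + \<beta> * sqrt n / 3)" by (rule mult_left_mono) simp_all
        from divide_right_mono[OF this, of "D1 x"] show ?thesis using Fx(3)[OF xS] by simp
      qed
      also have "\<dots> = (8/3) * \<beta> * sqrt n / D1 x" by simp
      also have "\<dots> \<le> (8/3) * \<beta> * sqrt n / D"
        by (rule divide_left_mono) (use Fx(1)[OF xS] Fx(3)[OF xS] Dpos b0 in simp_all)
      finally show ?thesis .
    qed

    define SS where "SS = {S. S \<subseteq> {..<n} \<and> real (card S) \<le> \<alpha> * n}"
    define fib where "fib S = {k \<in> PiE {..<n} (\<lambda>_. {-int M..int M}).
            (\<Sum>i<n. (if i \<in> S then h else 1) * \<bar>real_of_int (k i)\<bar>) \<le> K}" for S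
    define Cset where "Cset = Sigma SS fib"
    have fSS: "finite SS" unfolding SS_def
      by (rule finite_subset[of _ "Pow {..<n}"]) auto
    have ffib: "finite (fib S)" for S unfolding fib_def
      by (rule finite_subset[of _ "PiE {..<n} (\<lambda>_. {-int M..int M})"]) (auto intro: finite_PiE)
    have fC: "finite Cset" unfolding Cset_def using fSS ffib by auto
    have code_in: "code x \<in> Cset" if xS: "x \<in> SD" for x
    proof -
      have sub: "Sx x \<subseteq> {..<n}" unfolding Sx_def by auto
      have cardS: "real (card (Sx x)) \<le> \<alpha> * n" using Fx(5)[OF xS] unfolding sparse_def Sx_def by simp
      have sumb: "(\<Sum>i<n. wS (Sx x) i * \<bar>real_of_int (round (D1 x * x i / wS (Sx x) i))\<bar>) \<le> D1 x * sqrt n + n/2"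
        by (rule approx_center(2)[OF x1[OF xS] Fx(3)[OF xS] Fx(4)[OF xS] h0 h1 Sx_def, where w="wS (Sx x)" and C="\<lambda>i. wS (Sx x) i * real_of_int (round (D1 x * x i / wS (Sx x) i))"])
           (simp_all add: wS_def fun_eq_iff)
      have "D1 x * sqrt n \<le> 3 * D * sqrt n" using Fx(2)[OF xS] by (simp add: mult_right_mono)
      then have sumK: "(\<Sum>i<n. wS (Sx x) i * \<bar>real_of_int (round (D1 x * x i / wS (Sx x) i))\<bar>) \<le> K"
        using sumb unfolding K_def by linarith
      have box: "round (D1 x * x i / wS (Sx x) i) \<in> {-int M..int M}" if i: "i < n" for i
      proof -
        let ?k = "round (D1 x * x i / wS (Sx x) i)"
        have "wS (Sx x) i * \<bar>real_of_int ?k\<bar> \<le> (\<Sum>i<n. wS (Sx x) i * \<bar>real_of_int (round (D1 x * x i / wS (Sx x) i))\<bar>)"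
          by (rule member_le_sum) (use i h0 in \<open>auto simp: wS_def\<close>)
        then have "wS (Sx x) i * \<bar>real_of_int ?k\<bar> \<le> K" using sumK by linarith
        moreover have "h * \<bar>real_of_int ?k\<bar> \<le> wS (Sx x) i * \<bar>real_of_int ?k\<bar>"
          by (rule mult_right_mono) (use h1 in \<open>auto simp: wS_def\<close>)
        ultimately have "h * \<bar>real_of_int ?k\<bar> \<le> K" by linarith
        then have "\<bar>real_of_int ?k\<bar> \<le> K / h" using h0 by (simp add: field_simps)
        also have "\<dots> \<le> real_of_int \<lceil>K / h\<rceil>" by simp
        finally have "\<bar>?k\<bar> \<le> \<lceil>K / h\<rceil>" by linarith
        moreover have "\<lceil>K / h\<rceil> \<le> int M" unfolding M_def by simp
        ultimately show ?thesis by auto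
      qed
      have "kx x \<in> fib (Sx x)"
        unfolding fib_def kx_def using box sumK by (auto simp: wS_def)
      then show ?thesis unfolding code_def Cset_def SS_def using sub cardS by auto
    qed
    have cardC: "real (card Cset) \<le> 2 ^ n * (exp 1 ^ n * (1 + 2 * K / n) ^ n * (1/h) powr (\<alpha> * n))"
    proof -
      have "real (card Cset) = (\<Sum>S\<in>SS. real (card (fib S)))"
        unfolding Cset_def using fSS ffib by (simp add: card_SigmaI)
      also have "\<dots> \<le> (\<Sum>S\<in>SS. exp 1 ^ n * (1 + 2 * K / n) ^ n * (1/h) powr (\<alpha> * n))"
      proof (rule sum_mono)
        fix S assume S: "S \<in> SS"
        have "real (card (fib S)) \<le> exp 1 ^ n * (1 + 2 * K / n) ^ n * (1/h) ^ card S"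
          unfolding fib_def by (rule fiber_bound[OF n K0 h0 h1]) (use S in \<open>simp add: SS_def\<close>)
        also have "(1/h) ^ card S \<le> (1/h) powr (\<alpha> * n)"
        proof -
          have "(1/h) ^ card S = (1/h) powr (real (card S))" using h0 by (simp add: powr_realpow)
          also have "\<dots> \<le> (1/h) powr (\<alpha> * n)"
            by (rule powr_mono) (use S h0 h1 in \<open>simp_all add: SS_def\<close>)
          finally show ?thesis .
        qed
        then have "exp 1 ^ n * (1 + 2 * K / n) ^ n * (1/h) ^ card S \<le> exp 1 ^ n * (1 + 2 * K / n) ^ n * (1/h) powr (\<alpha> * n)"
          by (rule mult_left_mono) (use K0 in simp)
        finally show "real (card (fib S)) \<le> exp 1 ^ n * (1 + 2 * K / n) ^ n * (1/h) powr (\<alpha> * n)" .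
      qed
      also have "\<dots> = real (card SS) * (exp 1 ^ n * (1 + 2 * K / n) ^ n * (1/h) powr (\<alpha> * n))" by simp
      also have "\<dots> \<le> 2 ^ n * (exp 1 ^ n * (1 + 2 * K / n) ^ n * (1/h) powr (\<alpha> * n))"
      proof (rule mult_right_mono)
        have "card SS \<le> card (Pow {..<n})" by (rule card_mono) (auto simp: SS_def)
        then show "real (card SS) \<le> 2 ^ n" by (simp add: card_Pow)
      qed (use K0 in simp)
      finally show ?thesis .
    qed
    have fin: "real (card Cset) \<le> RHS"
      using cardC final_ineq[OF n a0 a1 b0 b1 Dge D4] unfolding RHS_def K_def h_def by linarith
    define rep where "rep c = (SOME x. x \<in> SD \<and> code x = c)" for c
    have rep: "rep (code x) \<in> SD \<and> code (rep (code x)) = code x" if "x \<in> SD" for x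
      unfolding rep_def by (rule someI[of _ x]) (use that in simp)
    define N where "N = rep ` (code ` SD)"
    have NS: "N \<subseteq> SD" unfolding N_def using rep by auto
    have fcode: "finite (code ` SD)" using fC code_in by (meson finite_subset image_subsetI)
    have finN: "finite N" unfolding N_def using fcode by simp
    have "card N \<le> card (code ` SD)" unfolding N_def by (rule card_image_le[OF fcode])
    also have "\<dots> \<le> card Cset" by (rule card_mono[OF fC]) (use code_in in auto)
    finally have cN: "real (card N) \<le> RHS" using fin by linarith
    have cover: "\<exists>y\<in>N. l2 n (\<lambda>i. x i - y i) \<le> 6 * \<beta> * sqrt (real n) / D" if xS: "x \<in> SD" for x
    proof (intro bexI)
      let ?y = "rep (code x)"
      show "?y \<in> N" unfolding N_def using xS by auto
      have yS: "?y \<in> SD" and cy: "code ?y = code x" using rep[OF xS] by auto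
      have "l2 n (\<lambda>i. x i - ?y i) \<le> L2_set (\<lambda>i. x i - cn (code x) i) {..<n} + L2_set (\<lambda>i. cn (code x) i - ?y i) {..<n}"
        unfolding l2_L2 by (rule L2_tri_diff)
      also have "L2_set (\<lambda>i. cn (code x) i - ?y i) {..<n} = L2_set (\<lambda>i. ?y i - cn (code ?y) i) {..<n}"
        using cy L2_diff_sym by metis
      also have "L2_set (\<lambda>i. x i - cn (code x) i) {..<n} + L2_set (\<lambda>i. ?y i - cn (code ?y) i) {..<n}
          \<le> (8/3) * \<beta> * sqrt n / D + (8/3) * \<beta> * sqrt n / D"
        using approx[OF xS] approx[OF yS] by linarith
      also have "\<dots> \<le> 6 * \<beta> * sqrt (real n) / D"
      proof -
        have e: "(8/3) * \<beta> * sqrt n / D + (8/3) * \<beta> * sqrt n / D = ((16/3) * \<beta> * sqrt n) / D"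
          by (simp add: add_divide_distrib[symmetric])
        have "(16/3) * \<beta> * sqrt n \<le> 6 * \<beta> * sqrt n" using b0 by simp
        from divide_right_mono[OF this, of D] Dpos show ?thesis unfolding e by simp
      qed
      finally show "l2 n (\<lambda>i. x i - ?y i) \<le> 6 * \<beta> * sqrt (real n) / D" .
    qed
    show ?thesis
      by (intro exI[of _ N] conjI) (use NS finN cN cover in \<open>simp_all add: SD_def RHS_def\<close>)
  qed
qed

end
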